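(* Consider the $Z_1$-Game on a tree $T$, at a position where at least one vertex is filled. Then, without spending any further tokens (using only the filling rule and the oracle operation), the player can, regardless of the oracle's responses, reach a position in which either all vertices are filled or there is exactly one filled vertex adjacent to two or more unfilled vertices.
   Context: Filling rule: if a filled vertex has exactly one unfilled neighbor (and any number of filled neighbors), that neighbor becomes filled; "applying the filling rule in a subgraph $H$" means applying it with neighborhoods taken in $H$. The $Z_q$-Game on $G$ ($q\ge 0$ an integer): initially all vertices are unfilled; a player repeatedly performs one of the following operations until all vertices are filled: (1) for one token, change any vertex from unfilled to filled; (2) at no cost, apply the filling rule in $G$; (3) if $F$ is the current set of filled vertices and $U_1,\dots,U_k$ are the vertex sets of the connected components of $G[V(G)\setminus F]$ with $k\ge q+1$, the player announces a selection of at least $q+1$ of the $U_i$ to an oracle (an adversary), the oracle returns a nonempty subset $\{U_{i_1},\dots,U_{i_\ell}\}$ of the selected components, and the player may at no cost apply the filling rule in $G[F\cup U_{i_1}\cup\cdots\cup U_{i_\ell}]$. The $Z_1$-Game is the case $q=1$. *)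

theory Defs
  imports Main
begin

definition simple_graph :: "'a set \<Rightarrow> ('a \<Rightarrow> 'a \<Rightarrow> bool) \<Rightarrow> bool" where
  "simple_graph V E \<longleftrightarrow> finite V \<and> (\<forall>u v. E u v \<longrightarrow> u \<in> V \<and> v \<in> V)
     \<and> (\<forall>u v. E u v \<longrightarrow> E v u) \<and> (\<forall>v. \<not> E v v)"

definition reach_in :: "'a set \<Rightarrow> ('a \<Rightarrow> 'a \<Rightarrow> bool) \<Rightarrow> 'a \<Rightarrow> 'a \<Rightarrow> bool" where
  "reach_in W E = (\<lambda>x y. E x y \<and> x \<in> W \<and> y \<in> W)\<^sup>*\<^sup>*"

definition connected_graph :: "'a set \<Rightarrow> ('a \<Rightarrow> 'a \<Rightarrow> bool) \<Rightarrow> bool" where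
  "connected_graph V E \<longleftrightarrow> V \<noteq> {} \<and> (\<forall>u\<in>V. \<forall>v\<in>V. reach_in V E u v)"

definition is_cycle :: "('a \<Rightarrow> 'a \<Rightarrow> bool) \<Rightarrow> 'a list \<Rightarrow> bool" where
  "is_cycle E cs \<longleftrightarrow> length cs \<ge> 3 \<and> distinct cs
     \<and> (\<forall>i. Suc i < length cs \<longrightarrow> E (cs ! i) (cs ! Suc i))
     \<and> E (last cs) (hd cs)"

definition tree :: "'a set \<Rightarrow> ('a \<Rightarrow> 'a \<Rightarrow> bool) \<Rightarrow> bool" where
  "tree V E \<longleftrightarrow> simple_graph V E \<and> connected_graph V E \<and> (\<nexists>cs. is_cycle E cs)"

definition components :: "'a set \<Rightarrow> ('a \<Rightarrow> 'a \<Rightarrow> bool) \<Rightarrow> 'a set set" where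
  "components W E = {{v \<in> W. reach_in W E u v} | u. u \<in> W}"

definition fill_step :: "'a set \<Rightarrow> ('a \<Rightarrow> 'a \<Rightarrow> bool) \<Rightarrow> 'a set \<Rightarrow> 'a set \<Rightarrow> bool" where
  "fill_step W E F F' \<longleftrightarrow> (\<exists>v w. v \<in> F \<and> w \<in> W - F \<and> E v w
       \<and> (\<forall>u. u \<in> W - F \<and> E v u \<longrightarrow> u = w) \<and> F' = insert w F)"

(* Token-free play of the Z_q-Game: from the position F (set of filled vertices),
  the player can force, whatever the adversary answers, reaching a position satisfying Goal,
  using only operations (2) and (3). *)
inductive can_reach_free :: "nat \<Rightarrow> 'a set \<Rightarrow> ('a \<Rightarrow> 'a \<Rightarrow> bool) \<Rightarrow> ('a set \<Rightarrow> bool) \<Rightarrow> 'a set \<Rightarrow> bool"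
  for q V E Goal where
  goal: "Goal F \<Longrightarrow> can_reach_free q V E Goal F"
| fill: "fill_step V E F F' \<Longrightarrow> can_reach_free q V E Goal F' \<Longrightarrow> can_reach_free q V E Goal F"
| adversary_move: "S \<subseteq> components (V - F) E \<Longrightarrow> card S \<ge> q + 1 \<Longrightarrow>
     (\<forall>R. R \<subseteq> S \<and> R \<noteq> {} \<longrightarrow>
        (\<exists>F'. (F' = F \<or> fill_step (F \<union> \<Union>R) E F F') \<and> can_reach_free q V E Goal F'))
     \<Longrightarrow> can_reach_free q V E Goal F"

end

theory Submission imports Defs begin

definition wpath :: "'a set \<Rightarrow> ('a \<Rightarrow> 'a \<Rightarrow> bool) \<Rightarrow> 'a list \<Rightarrow> 'a \<Rightarrow> 'a \<Rightarrow> bool" where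
  "wpath W E xs a b \<longleftrightarrow> xs \<noteq> [] \<and> hd xs = a \<and> last xs = b \<and> distinct xs \<and> set xs \<subseteq> W
     \<and> successively E xs \<and> (\<forall>z\<in>set xs. reach_in W E a z)"

lemma reach_path:
  assumes "reach_in W E a b" "a \<in> W"
  shows "\<exists>xs. wpath W E xs a b"
  using assms(1) unfolding reach_in_def
proof (induction rule: rtranclp_induct)
  case base
  then show ?case using assms(2) by (auto simp: wpath_def reach_in_def)
next
  case (step y z)
  then obtain xs where xs: "wpath W E xs a y" by blast
  show ?case
  proof (cases "z \<in> set xs")
    case True
    then obtain ys zs where sp: "xs = ys @ z # zs" by (meson split_list)
    have d: "distinct (ys @ [z])" using xs sp by (auto simp: wpath_def)
    have se: "set (ys @ [z]) \<subseteq> set xs" using sp by auto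
    have su: "successively E (ys @ [z])"
    proof -
      have "successively E ((ys @ [z]) @ zs)" using xs sp by (simp add: wpath_def)
      then show ?thesis by (simp only: successively_append_iff)
    qed
    have h: "hd (ys @ [z]) = a"
    proof (cases ys)
      case Nil then show ?thesis using xs sp by (simp add: wpath_def)
    next
      case (Cons p ps) then show ?thesis using xs sp by (simp add: wpath_def)
    qed
    have "wpath W E (ys @ [z]) a z"
      using xs d se su h unfolding wpath_def by auto
    then show ?thesis by blast
  next
    case False
    have "wpath W E (xs @ [z]) a z"
      using xs False step by (auto simp: wpath_def successively_append_iff reach_in_def
        intro: rtranclp.rtrancl_into_rtrancl)
    then show ?thesis by blast
  qed
qed

lemma reach_sym:
  assumes sym: "\<forall>u v. E u v \<longrightarrow> E v u" and "reach_in W E x y"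
  shows "reach_in W E y x"
  using assms(2) unfolding reach_in_def
proof (induction rule: rtranclp_induct)
  case base then show ?case by simp
next
  case (step y z)
  have "(\<lambda>x y. E x y \<and> x \<in> W \<and> y \<in> W) z y" using step sym by simp
  then show ?case using step.IH by (rule converse_rtranclp_into_rtranclp)
qed

lemma reach_trans:
  "reach_in W E x y \<Longrightarrow> reach_in W E y z \<Longrightarrow> reach_in W E x z"
  unfolding reach_in_def by simp

lemma hdlast: "xs \<noteq> [] \<Longrightarrow> hd xs \<noteq> last xs \<Longrightarrow> length xs \<ge> 2"
  by (cases xs; cases "tl xs") auto

lemma T1:
  assumes sym: "\<forall>u v. E u v \<longrightarrow> E v u" and acyc: "\<nexists>cs. is_cycle E cs"
    and "v \<notin> W" "x \<in> W" "x' \<in> W" "E v x" "E v x'" "reach_in W E x x'"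
  shows "x = x'"
proof (rule ccontr)
  assume ne: "x \<noteq> x'"
  obtain P where P: "wpath W E P x x'" using reach_path[OF assms(8,4)] by blast
  have Pf: "P \<noteq> []" "hd P = x" "last P = x'" "distinct P" "set P \<subseteq> W" "successively E P"
    using P by (simp_all add: wpath_def)
  have len: "length P \<ge> 2" using hdlast[OF Pf(1)] Pf(2,3) ne by blast
  have vP: "v \<notin> set P" using Pf(5) assms(3) by blast
  have ex': "E x' v" using sym assms(7) by blast
  have "successively E (v # P)" using Pf assms(6) by (simp add: successively_Cons)
  moreover have "distinct (v # P)" using Pf(4) vP by simp
  moreover have "length (v # P) \<ge> 3" using len by simp
  moreover have "E (last (v # P)) (hd (v # P))" using Pf ex' by simp
  ultimately have "is_cycle E (v # P)"
    unfolding is_cycle_def successively_conv_nth[symmetric] by blast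
  then show False using acyc by blast
qed

lemma wpath_reach_end:
  assumes "wpath W E P a b" "z \<in> set P" shows "reach_in W E a z"
  using assms by (auto simp: wpath_def)

lemma T2:
  assumes sym: "\<forall>u v. E u v \<longrightarrow> E v u" and acyc: "\<nexists>cs. is_cycle E cs"
    and "v1 \<notin> W" "v2 \<notin> W" "v1 \<noteq> v2" "a \<in> W" "b \<in> W" "x \<in> W" "x' \<in> W"
    and "E v1 a" "E v1 b" "E v2 x" "E v2 x'"
    and rax: "reach_in W E a x" and rbx: "reach_in W E b x'" and nab: "\<not> reach_in W E a b"
  shows False
proof -
  obtain P1 where P1: "wpath W E P1 a x" using reach_path[OF rax assms(6)] by blast
  have "reach_in W E x' b" using reach_sym[OF sym rbx] .
  then obtain P2 where P2: "wpath W E P2 x' b" using reach_path[OF _ assms(9)] by blast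
  have disj: "set P1 \<inter> set P2 = {}"
  proof (rule ccontr)
    assume "set P1 \<inter> set P2 \<noteq> {}"
    then obtain z where z1: "z \<in> set P1" and z2: "z \<in> set P2" by blast
    have az: "reach_in W E a z" using P1 z1 by (auto simp: wpath_def)
    have "reach_in W E x' z" using P2 z2 by (auto simp: wpath_def)
    then have zx: "reach_in W E z x'" by (rule reach_sym[OF sym])
    have ax: "reach_in W E a x'" by (rule reach_trans[OF az zx])
    have "reach_in W E a b" by (rule reach_trans[OF ax reach_sym[OF sym rbx]])
    then show False using nab by simp
  qed
  have P1f: "P1 \<noteq> []" "hd P1 = a" "last P1 = x" "distinct P1" "set P1 \<subseteq> W" "successively E P1"
    using P1 by (simp_all add: wpath_def)
  have P2f: "P2 \<noteq> []" "hd P2 = x'" "last P2 = b" "distinct P2" "set P2 \<subseteq> W" "successively E P2"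
    using P2 by (simp_all add: wpath_def)
  have n1: "v1 \<notin> set P1" "v1 \<notin> set P2" "v2 \<notin> set P1" "v2 \<notin> set P2"
    using P1f(5) P2f(5) assms(3,4) by blast+
  have exv: "E x v2" "E b v1" using sym assms(12,11) by blast+
  have s2: "successively E (v2 # P2)" using P2f assms(13) by (simp add: successively_Cons)
  have s12: "successively E (P1 @ v2 # P2)"
    using P1f s2 exv(1) by (simp add: successively_append_iff)
  have hd12: "hd (P1 @ v2 # P2) = a" using P1f by simp
  have "successively E (v1 # P1 @ v2 # P2)"
    using s12 hd12 assms(10) by (simp add: successively_Cons)
  moreover have "distinct (v1 # P1 @ v2 # P2)"
    using n1 P1f(4) P2f(4) disj assms(5) by auto
  moreover have "length (v1 # P1 @ v2 # P2) \<ge> 3" using P1f(1) by (cases P1) auto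
  moreover have "E (last (v1 # P1 @ v2 # P2)) (hd (v1 # P1 @ v2 # P2))" using P2f exv by simp
  ultimately have "is_cycle E (v1 # P1 @ v2 # P2)"
    unfolding is_cycle_def successively_conv_nth[symmetric] by blast
  then show False using acyc by blast
qed

lemma conn_edge:
  assumes "connected_graph V E" "F \<subseteq> V" "F \<noteq> {}" "F \<noteq> V"
  shows "\<exists>v\<in>F. \<exists>u\<in>V-F. E v u"
proof -
  obtain f where f: "f \<in> F" using assms by blast
  obtain x where x: "x \<in> V" "x \<notin> F" using assms by blast
  have r: "(\<lambda>x y. E x y \<and> x \<in> V \<and> y \<in> V)\<^sup>*\<^sup>* f x"
    using assms f x unfolding connected_graph_def reach_in_def by blast
  have "x \<notin> F \<longrightarrow> (\<exists>v\<in>F. \<exists>u\<in>V-F. E v u)"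
    using r
  proof (induction rule: rtranclp_induct)
    case base then show ?case using f by simp
  next
    case (step y z) then show ?case by blast
  qed
  then show ?thesis using x by blast
qed

lemma fill_comp:
  assumes sym: "\<forall>u v. E u v \<longrightarrow> E v u" and acyc: "\<nexists>cs. is_cycle E cs"
    and "v \<in> F" "c \<in> V - F" "E v c" "X \<subseteq> V - F" "c \<in> X"
    and h: "\<forall>u\<in>X. E v u \<longrightarrow> reach_in (V - F) E c u"
  shows "fill_step (F \<union> X) E F (insert c F)"
  unfolding fill_step_def
proof (intro exI conjI allI impI)
  show "v \<in> F" "c \<in> F \<union> X - F" "E v c" "insert c F = insert c F" using assms by auto
  fix u assume u: "u \<in> F \<union> X - F \<and> E v u"
  then have "u \<in> X" by blast
  then have "reach_in (V - F) E c u" using h u by blast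
  then show "u = c" using T1[OF sym acyc, of v "V - F" c u] assms u \<open>u \<in> X\<close> by auto
qed

theorem proposition3p2:
  fixes V :: "'a set" and E :: "'a \<Rightarrow> 'a \<Rightarrow> bool" and F :: "'a set"
  assumes "tree V E"
    and "F \<subseteq> V"
    and "F \<noteq> {}"
  shows "can_reach_free 1 V E
           (\<lambda>F'. F' = V \<or> (\<exists>!v. v \<in> F' \<and> card {u \<in> V - F'. E v u} \<ge> 2)) F"
proof -
  define G where "G = (\<lambda>F'. F' = V \<or> (\<exists>!v. v \<in> F' \<and> card {u \<in> V - F'. E v u} \<ge> 2))"
  have sym: "\<forall>u v. E u v \<longrightarrow> E v u" and acyc: "\<nexists>cs. is_cycle E cs" and fin: "finite V"
    and conn: "connected_graph V E" and inV: "\<forall>u v. E u v \<longrightarrow> u \<in> V \<and> v \<in> V"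
    using assms(1) by (auto simp: tree_def simple_graph_def)
  have main: "\<And>F. card (V - F) = n \<Longrightarrow> F \<subseteq> V \<Longrightarrow> F \<noteq> {} \<Longrightarrow> can_reach_free 1 V E G F" for n
  proof (induction n rule: less_induct)
    case (less n F)
    define W where "W = V - F"
    have IH: "can_reach_free 1 V E G (insert w F)" if w: "w \<in> W" for w
    proof -
      have "V - insert w F = (V - F) - {w}" by blast
      then have "card (V - insert w F) < n" using less.prems(1) w fin unfolding W_def
        by (metis card_Diff1_less finite_Diff)
      then show ?thesis using less.IH less.prems w unfolding W_def by blast
    qed
    show ?case
    proof (cases "G F")
      case True then show ?thesis by (rule can_reach_free.goal)
    next
      case notG: False
      show ?thesis
      proof (cases "\<exists>v\<in>F. card {u \<in> W. E v u} = 1")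
        case True
        then obtain v w where v: "v \<in> F" and U: "{u \<in> W. E v u} = {w}"
          by (metis card_1_singletonE)
        have "fill_step V E F (insert w F)"
          unfolding fill_step_def using v U unfolding W_def by blast
        moreover have "w \<in> W" using U by blast
        ultimately show ?thesis using IH can_reach_free.fill by blast
      next
        case no1: False
        have FV: "F \<noteq> V" using notG unfolding G_def by blast
        obtain v1 a where v1: "v1 \<in> F" and a: "a \<in> W" "E v1 a"
          using conn_edge[OF conn less.prems(2,3) FV] unfolding W_def by blast
        have finU: "finite {u \<in> W. E v u}" for v using fin unfolding W_def by auto
        have c2: "card {u \<in> W. E v1 u} \<ge> 2"
        proof -
          have "card {u \<in> W. E v1 u} \<noteq> 0" using a finU[of v1] by auto
          moreover have "card {u \<in> W. E v1 u} \<noteq> 1" using no1 v1 by blast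
          ultimately show ?thesis by linarith
        qed
        obtain v2 where v2: "v2 \<in> F" "card {u \<in> W. E v2 u} \<ge> 2" "v2 \<noteq> v1"
          using notG c2 v1 unfolding G_def W_def by blast
        obtain b where b: "b \<in> W" "E v1 b" "b \<noteq> a"
        proof -
          have "{u \<in> W. E v1 u} \<noteq> {a}" using c2 by auto
          then show ?thesis using that a by blast
        qed
        obtain y where y: "y \<in> W" "E v2 y"
        proof -
          have "{u \<in> W. E v2 u} \<noteq> {}" using v2 by (metis card.empty not_numeral_le_zero)
          then show ?thesis using that by blast
        qed
        have v1W: "v1 \<notin> W" "v2 \<notin> W" using v1 v2 unfolding W_def by auto
        have nab: "\<not> reach_in W E a b"
          using T1[OF sym acyc v1W(1) a(1) b(1) a(2) b(2)] b by blast
        obtain c where c: "c \<in> W" "E v1 c" and cA: "\<forall>x\<in>W. reach_in W E c x \<longrightarrow> \<not> E v2 x"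
        proof (cases "\<forall>x\<in>W. reach_in W E a x \<longrightarrow> \<not> E v2 x")
          case True then show ?thesis using that a by blast
        next
          case False
          then obtain x where x: "x \<in> W" "reach_in W E a x" "E v2 x" by blast
          have "\<forall>x\<in>W. reach_in W E b x \<longrightarrow> \<not> E v2 x"
          proof (intro ballI impI notI)
            fix x' assume "x' \<in> W" "reach_in W E b x'" "E v2 x'"
            then show False using T2[OF sym acyc v1W v2(3)[symmetric] a(1) b(1) x(1) \<open>x' \<in> W\<close> a(2) b(2) x(3)
               \<open>E v2 x'\<close> x(2) \<open>reach_in W E b x'\<close> nab] by blast
          qed
          then show ?thesis using that b by blast
        qed
        define A where "A = {z \<in> W. reach_in W E c z}"
        define C where "C = {z \<in> W. reach_in W E y z}"
        have refl: "reach_in W E z z" for z by (simp add: reach_in_def)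
        have AC: "A \<in> components W E" "C \<in> components W E"
          unfolding components_def A_def C_def using c y by blast+
        have yC: "y \<in> C" using y refl unfolding C_def by blast
        have cAm: "c \<in> A" using c refl unfolding A_def by blast
        have yA: "y \<notin> A" using cA y unfolding A_def by blast
        have ACne: "A \<noteq> C" using yC yA by blast
        have fA: "fill_step (F \<union> A) E F (insert c F)"
          using fill_comp[OF sym acyc v1(1), of c V A] c cAm unfolding A_def W_def by blast
        have fC: "fill_step (F \<union> C) E F (insert y F)"
          using fill_comp[OF sym acyc v2(1), of y V C] y yC unfolding C_def W_def by blast
        have fAC: "fill_step (F \<union> \<Union>{A, C}) E F (insert y F)"
        proof -
          have "\<forall>u\<in>A \<union> C. E v2 u \<longrightarrow> reach_in (V - F) E y u"
            using cA unfolding A_def C_def W_def by blast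
          then have "fill_step (F \<union> (A \<union> C)) E F (insert y F)"
            using fill_comp[OF sym acyc v2(1), of y V "A \<union> C"] y yC unfolding A_def C_def W_def by blast
          then show ?thesis by simp
        qed
        show ?thesis
        proof (rule can_reach_free.adversary_move[of "{A, C}"])
          show "{A, C} \<subseteq> components (V - F) E" using AC unfolding W_def by blast
          show "1 + 1 \<le> card {A, C}" using ACne by simp
          show "\<forall>R. R \<subseteq> {A, C} \<and> R \<noteq> {} \<longrightarrow>
            (\<exists>F'. (F' = F \<or> fill_step (F \<union> \<Union> R) E F F') \<and> can_reach_free 1 V E G F')"
          proof (intro allI impI)
            fix R assume R: "R \<subseteq> {A, C} \<and> R \<noteq> {}"
            have IHc: "can_reach_free 1 V E G (insert c F)" using IH c(1) by blast
            have IHy: "can_reach_free 1 V E G (insert y F)" using IH y(1) by blast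
            have "R = {A} \<or> R = {C} \<or> R = {A, C}" using R by blast
            then show "\<exists>F'. (F' = F \<or> fill_step (F \<union> \<Union> R) E F F') \<and> can_reach_free 1 V E G F'"
            proof (elim disjE)
              assume "R = {A}" then show ?thesis using fA IHc by auto
            next
              assume "R = {C}" then show ?thesis using fC IHy by auto
            next
              assume "R = {A, C}" then show ?thesis using fAC IHy by blast
            qed
          qed
        qed
      qed
    qed
  qed
  show ?thesis using main[OF refl assms(2,3)] unfolding G_def .
qed

end
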